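(* Let $Z$ be a stationary and isotropic centered unit variance Gaussian random field on $\mathbb{R}^d$ with covariance $\mathbb{E}[Z(x)Z(y)]=R(\|x-y\|)$, where $R:[0,\infty)\rightarrow\mathbb{R}$ is continuous, and let $\Xi_0=\{x:\,Z(x)\geq0\}$. Then the function $h\mapsto k_{mm}(\|h\|)$ of $(\Xi_0,Z)$ is positive definite on $\mathbb{R}^d$ if and only if $R\equiv1$.
   Context: $k_{mm}(\|h\|)=\overline{m}^{-2}\,\mathbb{E}[Z(o)Z(h)\mid Z(o)\geq0,Z(h)\geq0]$ with $\overline{m}=\mathbb{E}[Z(o)\mid Z(o)\geq0]$. A function $f:\mathbb{R}^d\rightarrow\mathbb{R}$ is positive definite if $\sum_{i,j=1}^n a_ia_jf(x_i-x_j)\geq0$ for all $n$, $x_i\in\mathbb{R}^d$, $a_i\in\mathbb{R}$. *)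

theory Defs
  imports "HOL-Probability.Probability"
begin

definition gaussian_rv :: "'a measure \<Rightarrow> ('a \<Rightarrow> real) \<Rightarrow> bool" where
  "gaussian_rv M X \<longleftrightarrow> X \<in> borel_measurable M \<and>
     ((\<exists>\<mu> \<sigma>. 0 < \<sigma> \<and> distributed M lborel X (normal_density \<mu> \<sigma>))
      \<or> (\<exists>c. AE \<omega> in M. X \<omega> = c))"

definition gaussian_field :: "'a measure \<Rightarrow> ('i \<Rightarrow> 'a \<Rightarrow> real) \<Rightarrow> bool" where
  "gaussian_field M Z \<longleftrightarrow>
     (\<forall>S a. finite S \<longrightarrow> gaussian_rv M (\<lambda>\<omega>. \<Sum>x\<in>S. a x * Z x \<omega>))"

definition cond_exp_ev :: "'a measure \<Rightarrow> ('a \<Rightarrow> real) \<Rightarrow> 'a set \<Rightarrow> real" where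
  "cond_exp_ev M X A = (\<integral>\<omega>. indicator A \<omega> * X \<omega> \<partial>M) / measure M A"

definition kmm :: "'a measure \<Rightarrow> ('v::zero \<Rightarrow> 'a \<Rightarrow> real) \<Rightarrow> 'v \<Rightarrow> real" where
  "kmm M Z h =
     cond_exp_ev M (\<lambda>\<omega>. Z 0 \<omega> * Z h \<omega>) {\<omega>\<in>space M. Z 0 \<omega> \<ge> 0 \<and> Z h \<omega> \<ge> 0}
     / (cond_exp_ev M (Z 0) {\<omega>\<in>space M. Z 0 \<omega> \<ge> 0})\<^sup>2"

definition positive_definite :: "('v::ab_group_add \<Rightarrow> real) \<Rightarrow> bool" where
  "positive_definite f \<longleftrightarrow>
     (\<forall>(n::nat) (x::nat \<Rightarrow> 'v) (a::nat \<Rightarrow> real).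
        (\<Sum>i<n. \<Sum>j<n. a i * a j * f (x i - x j)) \<ge> 0)"

end

theory Submission
  imports Defs "HOL-Real_Asymp.Real_Asymp"
begin


lemma gauss_std_normal:
  assumes M: "prob_space M" and G: "gaussian_rv M Z"
    and E1: "(\<integral>\<omega>. Z \<omega> \<partial>M) = 0" and E2: "(\<integral>\<omega>. Z \<omega> * Z \<omega> \<partial>M) = 1"
  shows "distributed M lborel Z std_normal_density"
proof -
  interpret prob_space M by fact
  from G have Zm[measurable]: "Z \<in> borel_measurable M" and
    cs: "(\<exists>\<mu> \<sigma>. 0 < \<sigma> \<and> distributed M lborel Z (normal_density \<mu> \<sigma>)) \<or> (\<exists>c. AE \<omega> in M. Z \<omega> = c)"
    unfolding gaussian_rv_def by auto
  show ?thesis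
  proof (cases "\<exists>\<mu> \<sigma>. 0 < \<sigma> \<and> distributed M lborel Z (normal_density \<mu> \<sigma>)")
    case True
    then obtain \<mu> \<sigma> where s: "0 < \<sigma>" and D: "distributed M lborel Z (normal_density \<mu> \<sigma>)" by blast
    have m0: "\<mu> = 0" using normal_distributed_expectation[OF s D] E1 by simp
    have "variance Z = \<sigma>\<^sup>2" by (rule normal_distributed_variance[OF s D])
    then have "\<sigma>\<^sup>2 = 1" using E1 E2 by (simp add: power2_eq_square)
    then have "\<sigma> = 1" using s by (auto simp: power2_eq_1_iff)
    with D m0 show ?thesis by simp
  next
    case False
    then obtain c where c: "AE \<omega> in M. Z \<omega> = c" using cs by blast
    have "(\<integral>\<omega>. Z \<omega> \<partial>M) = (\<integral>\<omega>. c \<partial>M)" by (rule integral_cong_AE) (use c in auto)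
    then have "c = 0" using E1 by (simp add: prob_space)
    have "(\<integral>\<omega>. Z \<omega> * Z \<omega> \<partial>M) = (\<integral>\<omega>. 0 \<partial>M)"
      by (rule integral_cong_AE) (use c \<open>c = 0\<close> in auto)
    then show ?thesis using E2 by simp
  qed
qed

lemma std_normal_cf:
  assumes M: "prob_space M" and D: "distributed M lborel Z std_normal_density"
  shows "(CLINT \<omega>|M. iexp (t * Z \<omega>)) = complex_of_real (exp (- (t^2) / 2))"
proof -
  have Zm[measurable]: "Z \<in> borel_measurable M" using D by (auto simp: distributed_def)
  have "distr M lborel Z = std_normal_distribution" using D by (simp add: distributed_def)
  then have "char std_normal_distribution t = (CLINT x|distr M lborel Z. iexp (t * x))"
    by (simp add: char_def)
  also have "\<dots> = (CLINT \<omega>|M. iexp (t * Z \<omega>))" by (rule integral_distr) auto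
  finally have "(CLINT \<omega>|M. iexp (t * Z \<omega>)) = char std_normal_distribution t" ..
  then show ?thesis by (simp add: char_std_normal_distribution)
qed

lemma abs_le_sq: "\<bar>x::real\<bar> \<le> 1 + x * x"
proof (cases "\<bar>x\<bar> \<le> 1")
  case True then show ?thesis by (simp add: add_increasing2)
next
  case False
  then have "1 * \<bar>x\<bar> \<le> \<bar>x\<bar> * \<bar>x\<bar>" by (intro mult_right_mono) auto
  then show ?thesis by (simp add: abs_mult_self_eq)
qed
lemma abs_prod_le: "\<bar>(x::real) * y\<bar> \<le> x * x + y * y"
proof -
  have h: "2 * (\<bar>x\<bar> * \<bar>y\<bar>) \<le> x * x + y * y"
    using sum_squares_bound[of "\<bar>x\<bar>" "\<bar>y\<bar>"] by (simp add: power2_eq_square mult.assoc)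
  have "0 \<le> \<bar>x\<bar> * \<bar>y\<bar>" by simp
  then show ?thesis unfolding abs_mult using h by linarith
qed

lemma cplx_int_eq:
  fixes f :: "'a \<Rightarrow> complex"
  assumes f: "integrable M f" and "(\<integral>\<omega>. Re (f \<omega>) \<partial>M) = r" and "(\<integral>\<omega>. Im (f \<omega>) \<partial>M) = s"
  shows "integral\<^sup>L M f = Complex r s"
proof (rule complex_eqI)
  show "Re (integral\<^sup>L M f) = Re (Complex r s)"
    using integral_bounded_linear[OF bounded_linear_Re f] assms(2) by simp
  show "Im (integral\<^sup>L M f) = Im (Complex r s)"
    using integral_bounded_linear[OF bounded_linear_Im f] assms(3) by simp
qed

lemma prob_density:
  assumes M: "prob_space M" and g[measurable]: "g \<in> borel_measurable M" and nn: "\<And>\<omega>. 0 \<le> g \<omega>"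
    and ig: "integrable M g" and E: "(\<integral>\<omega>. g \<omega> \<partial>M) = 1"
  shows "prob_space (density M g)"
proof (rule prob_spaceI)
  have "emeasure (density M g) (space (density M g)) = (\<integral>\<^sup>+\<omega>. ennreal (g \<omega>) * indicator (space M) \<omega> \<partial>M)"
    by (simp add: emeasure_density)
  also have "\<dots> = (\<integral>\<^sup>+\<omega>. ennreal (g \<omega>) \<partial>M)"
    by (intro nn_integral_cong) (auto simp: indicator_def)
  also have "\<dots> = ennreal (\<integral>\<omega>. g \<omega> \<partial>M)"
    by (rule nn_integral_eq_integral[OF ig]) (simp add: nn)
  finally show "emeasure (density M g) (space (density M g)) = 1" using E by simp
qed

lemma levy_std:
  assumes D: "prob_space D" and Ym[measurable]: "Y \<in> borel_measurable D"
    and cf: "\<And>u. (CLINT \<omega>|D. iexp (u * Y \<omega>)) = complex_of_real (exp (- (u^2) / 2))"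
  shows "distr D lborel Y = std_normal_distribution"
proof (rule Levy_uniqueness)
  show "real_distribution (distr D lborel Y)"
    using prob_space.prob_space_distr[OF D, of Y lborel]
    by (auto simp: real_distribution_def real_distribution_axioms_def)
  show "real_distribution std_normal_distribution" by (rule real_dist_normal_dist)
  show "char (distr D lborel Y) = char std_normal_distribution"
  proof
    fix u
    have "char (distr D lborel Y) u = (CLINT \<omega>|D. iexp (u * Y \<omega>))"
      unfolding char_def by (rule integral_distr) auto
    also have "\<dots> = complex_of_real (exp (- (u^2) / 2))" by (rule cf)
    also have "\<dots> = char std_normal_distribution u" by (simp only: char_std_normal_distribution)
    finally show "char (distr D lborel Y) u = char std_normal_distribution u" .
  qed
qed

locale gpair = prob_space M for M :: "'a measure" +
  fixes X W :: "'a \<Rightarrow> real"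
  assumes Xm[measurable]: "X \<in> borel_measurable M"
    and Wm[measurable]: "W \<in> borel_measurable M"
    and gauss: "\<And>u v. gaussian_rv M (\<lambda>\<omega>. u * X \<omega> + v * W \<omega>)"
    and EX: "(\<integral>\<omega>. X \<omega> \<partial>M) = 0" and EW: "(\<integral>\<omega>. W \<omega> \<partial>M) = 0"
    and EXX: "(\<integral>\<omega>. X \<omega> * X \<omega> \<partial>M) = 1" and EWW: "(\<integral>\<omega>. W \<omega> * W \<omega> \<partial>M) = 1"
    and EXW: "(\<integral>\<omega>. X \<omega> * W \<omega> \<partial>M) = 0"
begin

lemma int_XX: "integrable M (\<lambda>\<omega>. X \<omega> * X \<omega>)"
  using EXX not_integrable_integral_eq by fastforce
lemma int_WW: "integrable M (\<lambda>\<omega>. W \<omega> * W \<omega>)"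
  using EWW not_integrable_integral_eq by fastforce
lemma int_X: "integrable M X"
proof (rule Bochner_Integration.integrable_bound[of _ "\<lambda>\<omega>. 1 + X \<omega> * X \<omega>"])
  show "integrable M (\<lambda>\<omega>. 1 + X \<omega> * X \<omega>)" using int_XX by simp
  show "AE x in M. norm (X x) \<le> norm (1 + X x * X x)"
    by (auto intro!: AE_I2 abs_le_sq)
qed simp
lemma int_W: "integrable M W"
proof (rule Bochner_Integration.integrable_bound[of _ "\<lambda>\<omega>. 1 + W \<omega> * W \<omega>"])
  show "integrable M (\<lambda>\<omega>. 1 + W \<omega> * W \<omega>)" using int_WW by simp
  show "AE x in M. norm (W x) \<le> norm (1 + W x * W x)"
    by (auto intro!: AE_I2 abs_le_sq)
qed simp
lemma int_XW: "integrable M (\<lambda>\<omega>. X \<omega> * W \<omega>)"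
proof (rule Bochner_Integration.integrable_bound[of _ "\<lambda>\<omega>. X \<omega> * X \<omega> + W \<omega> * W \<omega>"])
  show "integrable M (\<lambda>\<omega>. X \<omega> * X \<omega> + W \<omega> * W \<omega>)" using int_XX int_WW by simp
  show "AE x in M. norm (X x * W x) \<le> norm (X x * X x + W x * W x)"
    using abs_prod_le by (intro AE_I2) (metis abs_of_nonneg real_norm_def add_nonneg_nonneg zero_le_square)
qed simp

lemma combo_moments:
  "(\<integral>\<omega>. u * X \<omega> + v * W \<omega> \<partial>M) = 0"
  "(\<integral>\<omega>. (u * X \<omega> + v * W \<omega>) * (u * X \<omega> + v * W \<omega>) \<partial>M) = u\<^sup>2 + v\<^sup>2"
proof -
  show "(\<integral>\<omega>. u * X \<omega> + v * W \<omega> \<partial>M) = 0" using int_X int_W EX EW by simp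
  have "(\<integral>\<omega>. (u * X \<omega> + v * W \<omega>) * (u * X \<omega> + v * W \<omega>) \<partial>M)
      = (\<integral>\<omega>. u\<^sup>2 * (X \<omega> * X \<omega>) + (2 * u * v) * (X \<omega> * W \<omega>) + v\<^sup>2 * (W \<omega> * W \<omega>) \<partial>M)"
    by (rule Bochner_Integration.integral_cong) (auto simp: algebra_simps power2_eq_square)
  also have "\<dots> = u\<^sup>2 * (\<integral>\<omega>. X \<omega> * X \<omega> \<partial>M) + (2 * u * v) * (\<integral>\<omega>. X \<omega> * W \<omega> \<partial>M) + v\<^sup>2 * (\<integral>\<omega>. W \<omega> * W \<omega> \<partial>M)"
    using int_XX int_WW int_XW by (simp add: Bochner_Integration.integral_add)
  also have "\<dots> = u\<^sup>2 * 1 + (2 * u * v) * 0 + v\<^sup>2 * 1"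
    unfolding EXX EWW EXW ..
  finally show "(\<integral>\<omega>. (u * X \<omega> + v * W \<omega>) * (u * X \<omega> + v * W \<omega>) \<partial>M) = u\<^sup>2 + v\<^sup>2" by simp
qed

lemma combo_cf: "(CLINT \<omega>|M. iexp (u * X \<omega> + v * W \<omega>)) = complex_of_real (exp (- (u\<^sup>2 + v\<^sup>2) / 2))"
proof (cases "u = 0 \<and> v = 0")
  case True
  then show ?thesis by (simp add: prob_space)
next
  case False
  define \<sigma> where "\<sigma> = sqrt (u\<^sup>2 + v\<^sup>2)"
  have pos: "u\<^sup>2 + v\<^sup>2 > 0" using False by (auto simp: sum_power2_gt_zero_iff)
  then have sp: "\<sigma> > 0" and ss: "\<sigma>\<^sup>2 = u\<^sup>2 + v\<^sup>2" unfolding \<sigma>_def by auto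
  define Z where "Z = (\<lambda>\<omega>. (u/\<sigma>) * X \<omega> + (v/\<sigma>) * W \<omega>)"
  have "distributed M lborel Z std_normal_density"
  proof (rule gauss_std_normal)
    show "prob_space M" by (rule prob_space_axioms)
    show "gaussian_rv M Z" unfolding Z_def by (rule gauss)
    show "integral\<^sup>L M Z = 0" unfolding Z_def by (rule combo_moments)
    have "(LINT \<omega>|M. Z \<omega> * Z \<omega>) = (u/\<sigma>)\<^sup>2 + (v/\<sigma>)\<^sup>2" unfolding Z_def by (rule combo_moments)
    also have "\<dots> = (u\<^sup>2 + v\<^sup>2) / \<sigma>\<^sup>2" by (simp add: power_divide add_divide_distrib)
    also have "\<dots> = 1" using sp ss pos False by simp
    finally show "(LINT \<omega>|M. Z \<omega> * Z \<omega>) = 1" .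
  qed
  from std_normal_cf[OF prob_space_axioms this, of \<sigma>]
  have "(CLINT \<omega>|M. iexp (\<sigma> * Z \<omega>)) = complex_of_real (exp (- \<sigma>\<^sup>2 / 2))" .
  moreover have "\<And>\<omega>. \<sigma> * Z \<omega> = u * X \<omega> + v * W \<omega>" unfolding Z_def using sp by (simp add: distrib_left)
  ultimately show ?thesis using ss by simp
qed

lemma Re_iexp: "Re (iexp t) = cos t" by (simp add: Re_exp)
lemma Im_iexp: "Im (iexp t) = sin t" by (simp add: Im_exp)

lemma iexp_add: "iexp (x + y) = iexp x * iexp y"
  by (simp add: distrib_left exp_add)

lemma combo_cos_sin:
  "(\<integral>\<omega>. cos (u * X \<omega> + v * W \<omega> + a) \<partial>M) = cos a * exp (- (u\<^sup>2 + v\<^sup>2) / 2)"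
  "(\<integral>\<omega>. sin (u * X \<omega> + v * W \<omega> + a) \<partial>M) = sin a * exp (- (u\<^sup>2 + v\<^sup>2) / 2)"
proof -
  let ?f = "\<lambda>\<omega>. iexp (u * X \<omega> + v * W \<omega>)"
  have int: "integrable M ?f" by (rule integrable_iexp) auto
  have "(CLINT \<omega>|M. iexp a * ?f \<omega>) = iexp a * complex_of_real (exp (- (u\<^sup>2 + v\<^sup>2) / 2))"
    using combo_cf by simp
  moreover have "\<And>\<omega>. iexp a * ?f \<omega> = iexp (u * X \<omega> + v * W \<omega> + a)"
    by (simp only: iexp_add mult.commute)
  ultimately have E: "(CLINT \<omega>|M. iexp (u * X \<omega> + v * W \<omega> + a)) = iexp a * complex_of_real (exp (- (u\<^sup>2 + v\<^sup>2) / 2))"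
    by (simp only:)
  let ?g = "\<lambda>\<omega>. iexp (u * X \<omega> + v * W \<omega> + a)"
  have int2: "integrable M ?g" by (rule integrable_iexp) auto
  have "Re (CLINT \<omega>|M. ?g \<omega>) = (\<integral>\<omega>. Re (?g \<omega>) \<partial>M)"
    by (rule integral_bounded_linear[symmetric, OF bounded_linear_Re int2])
  moreover have "Im (CLINT \<omega>|M. ?g \<omega>) = (\<integral>\<omega>. Im (?g \<omega>) \<partial>M)"
    by (rule integral_bounded_linear[symmetric, OF bounded_linear_Im int2])
  ultimately show "(\<integral>\<omega>. cos (u * X \<omega> + v * W \<omega> + a) \<partial>M) = cos a * exp (- (u\<^sup>2 + v\<^sup>2) / 2)"
    "(\<integral>\<omega>. sin (u * X \<omega> + v * W \<omega> + a) \<partial>M) = sin a * exp (- (u\<^sup>2 + v\<^sup>2) / 2)"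
    using E by (simp_all only: Re_iexp Im_iexp Re_complex_of_real Im_complex_of_real times_complex.sel mult_zero_right diff_zero add_0_right)
qed

lemma gX: "gaussian_rv M X"
  using gauss[of 1 0] by simp
lemma gW: "gaussian_rv M W"
  using gauss[of 0 1] by simp
lemma distX: "distributed M lborel X std_normal_density"
  by (rule gauss_std_normal[OF prob_space_axioms gX EX EXX])
lemma distW: "distributed M lborel W std_normal_density"
  by (rule gauss_std_normal[OF prob_space_axioms gW EW EWW])
lemma distrX: "distr M lborel X = std_normal_distribution"
  using distX by (simp add: distributed_def)
lemma distrW: "distr M lborel W = std_normal_distribution"
  using distW by (simp add: distributed_def)

lemma int_cos: "integrable M (\<lambda>\<omega>. f \<omega> * cos (g \<omega>))"
  if "f \<in> borel_measurable M" "g \<in> borel_measurable M" "\<And>\<omega>. \<bar>f \<omega>\<bar> \<le> (B::real)" for f g B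
proof (rule integrable_const_bound[of _ B])
  have "\<bar>f \<omega> * cos (g \<omega>)\<bar> \<le> B" for \<omega>
    using mult_left_le[OF abs_cos_le_one abs_ge_zero, of "f \<omega>" "g \<omega>"] that(3)[of \<omega>]
    by (simp add: abs_mult)
  then show "AE \<omega> in M. norm (f \<omega> * cos (g \<omega>)) \<le> B" by simp
qed (use that in simp)
lemma int_sin: "integrable M (\<lambda>\<omega>. f \<omega> * sin (g \<omega>))"
  if "f \<in> borel_measurable M" "g \<in> borel_measurable M" "\<And>\<omega>. \<bar>f \<omega>\<bar> \<le> (B::real)" for f g B
proof (rule integrable_const_bound[of _ B])
  have "\<bar>f \<omega> * sin (g \<omega>)\<bar> \<le> B" for \<omega>
    using mult_left_le[OF abs_sin_le_one abs_ge_zero, of "f \<omega>" "g \<omega>"] that(3)[of \<omega>]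
    by (simp add: abs_mult)
  then show "AE \<omega> in M. norm (f \<omega> * sin (g \<omega>)) \<le> B" by simp
qed (use that in simp)

lemma int_bdd: "integrable M f" if "f \<in> borel_measurable M" "\<And>\<omega>. \<bar>f \<omega>\<bar> \<le> (B::real)" for f B
  using that by (intro integrable_const_bound[of _ B]) auto

lemma cos_only: "(\<integral>\<omega>. cos (u * X \<omega>) \<partial>M) = exp (- (u\<^sup>2) / 2)"
  using combo_cos_sin(1)[of u 0 0] by simp
lemma sin_only: "(\<integral>\<omega>. sin (u * X \<omega>) \<partial>M) = 0"
  using combo_cos_sin(2)[of u 0 0] by simp

lemma ind_cos:
  assumes A[measurable]: "A \<in> sets borel" and ca: "0 \<le> cos a"
  shows "(\<integral>\<omega>. indicator A (X \<omega>) * cos (v * W \<omega> + a) \<partial>M)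
       = cos a * exp (- (v\<^sup>2) / 2) * (\<integral>\<omega>. indicator A (X \<omega>) \<partial>M)"
proof -
  define c where "c = 1 + cos a * exp (- (v\<^sup>2) / 2)"
  have c1: "c \<ge> 1" using ca by (simp add: c_def)
  define g where "g \<omega> = (1 + cos (v * W \<omega> + a)) / c" for \<omega>
  have g_nn: "0 \<le> g \<omega>" for \<omega>
  proof -
    have "-1 \<le> cos (v * W \<omega> + a)" by (rule cos_ge_minus_one)
    then show ?thesis unfolding g_def using c1 by (intro divide_nonneg_pos) (linarith, linarith)
  qed
  have g_le: "\<bar>g \<omega>\<bar> \<le> 2" for \<omega>
  proof -
    have "cos (v * W \<omega> + a) \<le> 1" by (rule cos_le_one)
    then have "1 + cos (v * W \<omega> + a) \<le> 2 * c" using c1 by linarith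
    then have "g \<omega> \<le> 2" unfolding g_def using c1 by (simp add: divide_le_eq)
    then show ?thesis using g_nn[of \<omega>] by simp
  qed
  have gm[measurable]: "g \<in> borel_measurable M" unfolding g_def by measurable
  have Ecos: "(\<integral>\<omega>. cos (v * W \<omega> + a) \<partial>M) = cos a * exp (- (v\<^sup>2) / 2)"
    using combo_cos_sin(1)[of 0 v a] by simp
  have intcos: "integrable M (\<lambda>\<omega>. cos (v * W \<omega> + a))" by (rule int_bdd[of _ 1]) auto
  have intg: "integrable M g" by (rule int_bdd[OF gm g_le])
  have Eg: "(\<integral>\<omega>. g \<omega> \<partial>M) = 1"
  proof -
    have "(\<integral>\<omega>. g \<omega> \<partial>M) = (\<integral>\<omega>. 1 + cos (v * W \<omega> + a) \<partial>M) / c"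
      unfolding g_def by simp
    also have "\<dots> = c / c" using intcos Ecos by (simp add: c_def prob_space)
    finally show ?thesis using c1 by simp
  qed
  have D: "prob_space (density M g)" by (rule prob_density[OF prob_space_axioms gm g_nn intg Eg])
  have "distr (density M g) lborel X = std_normal_distribution"
  proof (rule levy_std[OF D])
    show "X \<in> borel_measurable (density M g)" by simp
    fix u
    have "(CLINT \<omega>|density M g. iexp (u * X \<omega>)) = (CLINT \<omega>|M. g \<omega> *\<^sub>R iexp (u * X \<omega>))"
      by (rule integral_density) (auto simp: g_nn)
    also have "\<dots> = Complex (exp (- (u\<^sup>2) / 2)) 0"
    proof (rule cplx_int_eq)
      show "integrable M (\<lambda>\<omega>. g \<omega> *\<^sub>R iexp (u * X \<omega>))"
        by (rule Bochner_Integration.integrable_bound[OF intg]) (auto simp: norm_exp_i_times g_nn)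
      have pt: "Re (g \<omega> *\<^sub>R iexp (u * X \<omega>)) =
          (cos (u * X \<omega>) + (cos (u * X \<omega> + v * W \<omega> + a) + cos ((-u) * X \<omega> + v * W \<omega> + a)) / 2) / c" for \<omega>
      proof -
        have "Re (g \<omega> *\<^sub>R iexp (u * X \<omega>)) = g \<omega> * cos (u * X \<omega>)" by (simp only: scaleR_complex.sel Re_iexp)
        also have "\<dots> = (cos (u * X \<omega>) + cos (v * W \<omega> + a) * cos (u * X \<omega>)) / c"
          by (simp add: g_def algebra_simps)
        also have "cos (v * W \<omega> + a) * cos (u * X \<omega>) = (cos (u * X \<omega> + v * W \<omega> + a) + cos ((-u) * X \<omega> + v * W \<omega> + a)) / 2"
        proof -
          have e1: "(-u) * X \<omega> + v * W \<omega> + a = v * W \<omega> + a - u * X \<omega>" by simp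
          have e2: "u * X \<omega> + v * W \<omega> + a = v * W \<omega> + a + u * X \<omega>" by simp
          show ?thesis unfolding e1 e2 cos_times_cos by simp
        qed
        finally show ?thesis .
      qed
      have i1: "integrable M (\<lambda>\<omega>. cos (u * X \<omega>))" by (rule int_bdd[of _ 1]) auto
      have i2: "integrable M (\<lambda>\<omega>. cos (u * X \<omega> + v * W \<omega> + a))" by (rule int_bdd[of _ 1]) auto
      have i3: "integrable M (\<lambda>\<omega>. cos ((-u) * X \<omega> + v * W \<omega> + a))" by (rule int_bdd[of _ 1]) auto
      have "(\<integral>\<omega>. Re (g \<omega> *\<^sub>R iexp (u * X \<omega>)) \<partial>M) =
          ((\<integral>\<omega>. cos (u * X \<omega>) \<partial>M) + ((\<integral>\<omega>. cos (u * X \<omega> + v * W \<omega> + a) \<partial>M)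
             + (\<integral>\<omega>. cos ((-u) * X \<omega> + v * W \<omega> + a) \<partial>M)) / 2) / c"
        unfolding pt using i1 i2 i3 by simp
      also have "\<dots> = (exp (- (u\<^sup>2) / 2) + cos a * exp (- (u\<^sup>2 + v\<^sup>2) / 2)) / c"
        by (simp only: cos_only combo_cos_sin(1)[of u v a] combo_cos_sin(1)[of "-u" v a] power2_minus) simp
      also have "\<dots> = exp (- (u\<^sup>2) / 2)"
      proof -
        have "- (u\<^sup>2 + v\<^sup>2) / 2 = - (u\<^sup>2) / 2 + - (v\<^sup>2) / 2" by (simp add: field_simps)
        then have ee: "exp (- (u\<^sup>2 + v\<^sup>2) / 2) = exp (- (u\<^sup>2) / 2) * exp (- (v\<^sup>2) / 2)"
          by (simp only: exp_add)
        have "exp (- (u\<^sup>2) / 2) + cos a * exp (- (u\<^sup>2 + v\<^sup>2) / 2) = exp (- (u\<^sup>2) / 2) * c"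
          unfolding ee c_def by (simp add: algebra_simps)
        then show ?thesis using c1 by simp
      qed
      finally show "(\<integral>\<omega>. Re (g \<omega> *\<^sub>R iexp (u * X \<omega>)) \<partial>M) = exp (- (u\<^sup>2) / 2)" .
      have pt2: "Im (g \<omega> *\<^sub>R iexp (u * X \<omega>)) =
          (sin (u * X \<omega>) + (sin (u * X \<omega> + v * W \<omega> + a) + sin (u * X \<omega> + (-v) * W \<omega> + (-a))) / 2) / c" for \<omega>
      proof -
        have "Im (g \<omega> *\<^sub>R iexp (u * X \<omega>)) = g \<omega> * sin (u * X \<omega>)" by (simp only: scaleR_complex.sel Im_iexp)
        also have "\<dots> = (sin (u * X \<omega>) + sin (u * X \<omega>) * cos (v * W \<omega> + a)) / c"
          by (simp add: g_def algebra_simps)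
        also have "sin (u * X \<omega>) * cos (v * W \<omega> + a) = (sin (u * X \<omega> + v * W \<omega> + a) + sin (u * X \<omega> + (-v) * W \<omega> + (-a))) / 2"
        proof -
          have e1: "u * X \<omega> + (-v) * W \<omega> + (-a) = u * X \<omega> - (v * W \<omega> + a)" by simp
          have e2: "u * X \<omega> + v * W \<omega> + a = u * X \<omega> + (v * W \<omega> + a)" by simp
          show ?thesis unfolding e1 e2 sin_times_cos by simp
        qed
        finally show ?thesis .
      qed
      have j1: "integrable M (\<lambda>\<omega>. sin (u * X \<omega>))" by (rule int_bdd[of _ 1]) auto
      have j2: "integrable M (\<lambda>\<omega>. sin (u * X \<omega> + v * W \<omega> + a))" by (rule int_bdd[of _ 1]) auto
      have j3: "integrable M (\<lambda>\<omega>. sin (u * X \<omega> + (-v) * W \<omega> + (-a)))" by (rule int_bdd[of _ 1]) auto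
      have "(\<integral>\<omega>. Im (g \<omega> *\<^sub>R iexp (u * X \<omega>)) \<partial>M) =
          ((\<integral>\<omega>. sin (u * X \<omega>) \<partial>M) + ((\<integral>\<omega>. sin (u * X \<omega> + v * W \<omega> + a) \<partial>M)
             + (\<integral>\<omega>. sin (u * X \<omega> + (-v) * W \<omega> + (-a)) \<partial>M)) / 2) / c"
        unfolding pt2 using j1 j2 j3 by simp
      also have "\<dots> = 0"
        by (simp only: sin_only combo_cos_sin(2) sin_minus power2_minus) simp
      finally show "(\<integral>\<omega>. Im (g \<omega> *\<^sub>R iexp (u * X \<omega>)) \<partial>M) = 0" .
    qed
    finally show "(CLINT \<omega>|density M g. iexp (u * X \<omega>)) = complex_of_real (exp (- (u\<^sup>2) / 2))"
      by (simp add: Complex_eq)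
  qed
  then have "(LINT x|distr (density M g) lborel X. (indicator A x :: real)) = (LINT x|distr M lborel X. (indicator A x :: real))"
    by (simp add: distrX)
  moreover have "(LINT x|distr (density M g) lborel X. (indicator A x :: real)) = (LINT \<omega>|M. g \<omega> * (indicator A (X \<omega>) :: real))"
  proof -
    have Xd: "X \<in> measurable (density M g) lborel" by simp
    have "(LINT x|distr (density M g) lborel X. (indicator A x :: real)) = (LINT \<omega>|density M g. (indicator A (X \<omega>) :: real))"
      using integral_distr[OF Xd, of "indicator A :: real \<Rightarrow> real"] by simp
    also have "\<dots> = (LINT \<omega>|M. g \<omega> * (indicator A (X \<omega>) :: real))"
      by (subst integral_density) (auto simp: g_nn)
    finally show ?thesis .
  qed
  moreover have "(LINT x|distr M lborel X. (indicator A x :: real)) = (LINT \<omega>|M. (indicator A (X \<omega>) :: real))"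
    using integral_distr[of X M lborel "indicator A :: real \<Rightarrow> real"] by simp
  ultimately have eq: "(LINT \<omega>|M. g \<omega> * (indicator A (X \<omega>) :: real)) = (LINT \<omega>|M. (indicator A (X \<omega>) :: real))" by simp
  have iA: "integrable M (\<lambda>\<omega>. indicator A (X \<omega>) :: real)" by (rule int_bdd[of _ 1]) (auto simp: indicator_def)
  have iAc: "integrable M (\<lambda>\<omega>. indicator A (X \<omega>) * cos (v * W \<omega> + a))"
    by (rule int_bdd[of _ 1]) (auto simp: indicator_def)
  have "(LINT \<omega>|M. g \<omega> * indicator A (X \<omega>)) =
      ((LINT \<omega>|M. indicator A (X \<omega>)) + (LINT \<omega>|M. indicator A (X \<omega>) * cos (v * W \<omega> + a))) / c"
  proof -
    have "(LINT \<omega>|M. g \<omega> * indicator A (X \<omega>)) = (LINT \<omega>|M. (indicator A (X \<omega>) + indicator A (X \<omega>) * cos (v * W \<omega> + a)) / c)"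
      by (rule Bochner_Integration.integral_cong) (auto simp: g_def algebra_simps)
    also have "\<dots> = ((LINT \<omega>|M. indicator A (X \<omega>)) + (LINT \<omega>|M. indicator A (X \<omega>) * cos (v * W \<omega> + a))) / c"
      using iA iAc by simp
    finally show ?thesis .
  qed
  with eq c1 show ?thesis by (simp add: c_def field_simps)
qed

lemma ind_prod:
  assumes A[measurable]: "A \<in> sets borel" and B[measurable]: "B \<in> sets borel"
  shows "(\<integral>\<omega>. indicator A (X \<omega>) * indicator B (W \<omega>) \<partial>M)
       = (\<integral>\<omega>. indicator A (X \<omega>) \<partial>M) * (\<integral>\<omega>. indicator B (W \<omega>) \<partial>M :: real)"
proof -
  define p where "p = (\<integral>\<omega>. indicator A (X \<omega>) \<partial>M :: real)"
  have iA: "integrable M (\<lambda>\<omega>. indicator A (X \<omega>) :: real)" by (rule int_bdd[of _ 1]) (auto simp: indicator_def)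
  have iAB: "integrable M (\<lambda>\<omega>. indicator A (X \<omega>) * indicator B (W \<omega>) :: real)"
    by (rule int_bdd[of _ 1]) (auto simp: indicator_def)
  have iB: "integrable M (\<lambda>\<omega>. indicator B (W \<omega>) :: real)" by (rule int_bdd[of _ 1]) (auto simp: indicator_def)
  have p0: "p \<ge> 0" unfolding p_def by (rule Bochner_Integration.integral_nonneg) auto
  show ?thesis
  proof (cases "p = 0")
    case True
    have "(\<integral>\<omega>. indicator A (X \<omega>) * indicator B (W \<omega>) \<partial>M) \<le> p"
      unfolding p_def by (rule integral_mono[OF iAB iA]) (auto simp: indicator_def)
    moreover have "(\<integral>\<omega>. indicator A (X \<omega>) * indicator B (W \<omega>) \<partial>M :: real) \<ge> 0"
      by (rule Bochner_Integration.integral_nonneg) auto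
    ultimately show ?thesis using True unfolding p_def by simp
  next
    case False
    with p0 have pp: "p > 0" by simp
    define f where "f \<omega> = indicator A (X \<omega>) / p" for \<omega>
    have f_nn: "0 \<le> f \<omega>" for \<omega> using pp by (simp add: f_def)
    have fm[measurable]: "f \<in> borel_measurable M" unfolding f_def by measurable
    have intf: "integrable M f" unfolding f_def using iA by simp
    have Ef: "(\<integral>\<omega>. f \<omega> \<partial>M) = 1" unfolding f_def using pp by (simp add: p_def)
    have D: "prob_space (density M f)" by (rule prob_density[OF prob_space_axioms fm f_nn intf Ef])
    have "distr (density M f) lborel W = std_normal_distribution"
    proof (rule levy_std[OF D])
      show "W \<in> borel_measurable (density M f)" by simp
      fix v
      have "(CLINT \<omega>|density M f. iexp (v * W \<omega>)) = (CLINT \<omega>|M. f \<omega> *\<^sub>R iexp (v * W \<omega>))"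
        by (rule integral_density) (auto simp: f_nn)
      also have "\<dots> = Complex (exp (- (v\<^sup>2) / 2)) 0"
      proof (rule cplx_int_eq)
        show "integrable M (\<lambda>\<omega>. f \<omega> *\<^sub>R iexp (v * W \<omega>))"
          by (rule Bochner_Integration.integrable_bound[OF intf]) (auto simp: norm_exp_i_times f_nn)
        have "(\<integral>\<omega>. Re (f \<omega> *\<^sub>R iexp (v * W \<omega>)) \<partial>M) = (\<integral>\<omega>. indicator A (X \<omega>) * cos (v * W \<omega> + 0) \<partial>M) / p"
          by (simp only: scaleR_complex.sel Re_iexp f_def add_0_right) simp
        also have "\<dots> = exp (- (v\<^sup>2) / 2)"
        proof -
          have c0: "0 \<le> cos (0::real)" by simp
          show ?thesis using pp by (simp only: ind_cos[OF A c0, of v]) (simp add: p_def)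
        qed
        finally show "(\<integral>\<omega>. Re (f \<omega> *\<^sub>R iexp (v * W \<omega>)) \<partial>M) = exp (- (v\<^sup>2) / 2)" .
        have sc: "sin t = cos (t + - (pi / 2))" for t by (simp add: cos_diff)
        have "(\<integral>\<omega>. Im (f \<omega> *\<^sub>R iexp (v * W \<omega>)) \<partial>M) = (\<integral>\<omega>. indicator A (X \<omega>) * cos (v * W \<omega> + - (pi / 2)) \<partial>M) / p"
          by (simp only: scaleR_complex.sel Im_iexp f_def sc) simp
        also have "\<dots> = 0"
        proof -
          have c0: "0 \<le> cos (- (pi / 2))" by simp
          show ?thesis by (simp only: ind_cos[OF A c0, of v]) simp
        qed
        finally show "(\<integral>\<omega>. Im (f \<omega> *\<^sub>R iexp (v * W \<omega>)) \<partial>M) = 0" .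
      qed
      finally show "(CLINT \<omega>|density M f. iexp (v * W \<omega>)) = complex_of_real (exp (- (v\<^sup>2) / 2))"
        by (simp add: Complex_eq)
    qed
    then have "(LINT x|distr (density M f) lborel W. (indicator B x :: real)) = (LINT x|distr M lborel W. (indicator B x :: real))"
      by (simp add: distrW)
    moreover have "(LINT x|distr (density M f) lborel W. (indicator B x :: real)) = (LINT \<omega>|M. f \<omega> * (indicator B (W \<omega>) :: real))"
    proof -
      have Wd: "W \<in> measurable (density M f) lborel" by simp
      have "(LINT x|distr (density M f) lborel W. (indicator B x :: real)) = (LINT \<omega>|density M f. (indicator B (W \<omega>) :: real))"
        using integral_distr[OF Wd, of "indicator B :: real \<Rightarrow> real"] by simp
      also have "\<dots> = (LINT \<omega>|M. f \<omega> * (indicator B (W \<omega>) :: real))"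
        by (subst integral_density) (auto simp: f_nn)
      finally show ?thesis .
    qed
    moreover have "(LINT x|distr M lborel W. (indicator B x :: real)) = (LINT \<omega>|M. (indicator B (W \<omega>) :: real))"
      using integral_distr[of W M lborel "indicator B :: real \<Rightarrow> real"] by simp
    ultimately have eq: "(LINT \<omega>|M. f \<omega> * (indicator B (W \<omega>) :: real)) = (LINT \<omega>|M. (indicator B (W \<omega>) :: real))"
      by simp
    have "(LINT \<omega>|M. f \<omega> * (indicator B (W \<omega>) :: real)) = (\<integral>\<omega>. indicator A (X \<omega>) * indicator B (W \<omega>) \<partial>M) / p"
      unfolding f_def by simp
    with eq pp show ?thesis unfolding p_def[symmetric] by (simp add: field_simps)
  qed
qed

lemma joint_law: "distr M (lborel \<Otimes>\<^sub>M lborel) (\<lambda>\<omega>. (W \<omega>, X \<omega>)) = std_normal_distribution \<Otimes>\<^sub>M std_normal_distribution"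
proof (rule pair_measure_eqI[symmetric])
  interpret N: prob_space std_normal_distribution
    using real_dist_normal_dist by (simp add: real_distribution_def)
  show "sigma_finite_measure std_normal_distribution" by (rule N.sigma_finite_measure_axioms)
  show "sigma_finite_measure std_normal_distribution" by (rule N.sigma_finite_measure_axioms)
  show "sets (std_normal_distribution \<Otimes>\<^sub>M std_normal_distribution) = sets (distr M (lborel \<Otimes>\<^sub>M lborel) (\<lambda>\<omega>. (W \<omega>, X \<omega>)))"
  proof -
    have "sets (std_normal_distribution \<Otimes>\<^sub>M std_normal_distribution) = sets (lborel \<Otimes>\<^sub>M (lborel::real measure))"
      by (rule sets_pair_measure_cong) simp_all
    then show ?thesis by (simp only: sets_distr)
  qed
  fix A B assume "A \<in> sets std_normal_distribution" "B \<in> sets std_normal_distribution"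
  then have A[measurable]: "A \<in> sets borel" and B[measurable]: "B \<in> sets borel" by auto
  have eA: "emeasure std_normal_distribution A = ennreal (\<integral>\<omega>. indicator A (W \<omega>) \<partial>M)"
  proof -
    have "emeasure std_normal_distribution A = emeasure (distr M lborel W) A" by (simp add: distrW)
    also have "\<dots> = emeasure M (W -` A \<inter> space M)" by (rule emeasure_distr) auto
    also have "\<dots> = ennreal (measure M (W -` A \<inter> space M))" by (simp add: emeasure_eq_measure)
    also have "measure M (W -` A \<inter> space M) = (\<integral>\<omega>. indicator (W -` A \<inter> space M) \<omega> \<partial>M)" by simp
    also have "\<dots> = (\<integral>\<omega>. indicator A (W \<omega>) \<partial>M)"
      by (rule Bochner_Integration.integral_cong) (auto simp: indicator_def)
    finally show ?thesis .
  qed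
  have eB: "emeasure std_normal_distribution B = ennreal (\<integral>\<omega>. indicator B (X \<omega>) \<partial>M)"
  proof -
    have "emeasure std_normal_distribution B = emeasure (distr M lborel X) B" by (simp add: distrX)
    also have "\<dots> = emeasure M (X -` B \<inter> space M)" by (rule emeasure_distr) auto
    also have "\<dots> = ennreal (measure M (X -` B \<inter> space M))" by (simp add: emeasure_eq_measure)
    also have "measure M (X -` B \<inter> space M) = (\<integral>\<omega>. indicator (X -` B \<inter> space M) \<omega> \<partial>M)" by simp
    also have "\<dots> = (\<integral>\<omega>. indicator B (X \<omega>) \<partial>M)"
      by (rule Bochner_Integration.integral_cong) (auto simp: indicator_def)
    finally show ?thesis .
  qed
  have eAB: "emeasure (distr M (lborel \<Otimes>\<^sub>M lborel) (\<lambda>\<omega>. (W \<omega>, X \<omega>))) (A \<times> B)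
      = ennreal (\<integral>\<omega>. indicator B (X \<omega>) * indicator A (W \<omega>) \<partial>M)"
  proof -
    let ?S = "(\<lambda>\<omega>. (W \<omega>, X \<omega>)) -` (A \<times> B) \<inter> space M"
    have "emeasure (distr M (lborel \<Otimes>\<^sub>M lborel) (\<lambda>\<omega>. (W \<omega>, X \<omega>))) (A \<times> B) = emeasure M ?S"
      by (rule emeasure_distr) auto
    also have "\<dots> = ennreal (measure M ?S)" by (simp add: emeasure_eq_measure)
    also have "measure M ?S = (\<integral>\<omega>. indicator ?S \<omega> \<partial>M)" by simp
    also have "\<dots> = (\<integral>\<omega>. indicator B (X \<omega>) * indicator A (W \<omega>) \<partial>M)"
      by (rule Bochner_Integration.integral_cong) (auto simp: indicator_def)
    finally show ?thesis .
  qed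
  have nA: "0 \<le> (\<integral>\<omega>. indicator A (W \<omega>) \<partial>M :: real)" by (rule Bochner_Integration.integral_nonneg) auto
  have nB: "0 \<le> (\<integral>\<omega>. indicator B (X \<omega>) \<partial>M :: real)" by (rule Bochner_Integration.integral_nonneg) auto
  show "emeasure std_normal_distribution A * emeasure std_normal_distribution B =
      emeasure (distr M (lborel \<Otimes>\<^sub>M lborel) (\<lambda>\<omega>. (W \<omega>, X \<omega>))) (A \<times> B)"
    unfolding eA eB eAB ind_prod[OF B A] using nA nB by (simp add: ennreal_mult mult.commute)
qed

end



lemma ftc_Ici:
  fixes f F :: "real \<Rightarrow> real"
  assumes F: "\<And>x. (F has_real_derivative f x) (at x)"
    and f: "\<And>x. isCont f x"
    and fi: "integrable lborel f"
    and L: "(F \<longlongrightarrow> L) at_top"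
  shows "(LINT x|lborel. indicator {m..} x * f x) = L - F m"
proof -
  have "continuous_on UNIV f" using f by (simp add: continuous_at_imp_continuous_on)
  then have fm[measurable]: "f \<in> borel_measurable borel" by (rule borel_measurable_continuous_onI)
  have "(LBINT x=ereal m..\<infinity>. f x) = L - F m"
  proof (rule interval_integral_FTC_integrable)
    show "ereal m < \<infinity>" by simp
    show "(F has_vector_derivative f x) (at x)" for x
      using F[of x] by (simp add: has_real_derivative_iff_has_vector_derivative)
    show "isCont f x" for x by (rule f)
    show "set_integrable lborel (einterval (ereal m) \<infinity>) f"
      unfolding set_integrable_def by (rule integrable_mult_indicator) (auto intro: fi)
    have "isCont F m" using F[of m] by (rule DERIV_isCont)
    then have "(F \<longlongrightarrow> F m) (at_right m)"
      by (simp add: isCont_def filterlim_at_split)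
    then show "((F \<circ> real_of_ereal) \<longlongrightarrow> F m) (at_right (ereal m))"
      by (simp add: ereal_tendsto_simps1)
    show "((F \<circ> real_of_ereal) \<longlongrightarrow> L) (at_left \<infinity>)"
      using L by (simp add: ereal_tendsto_simps1)
  qed
  then have "(LINT x|lborel. indicator {m<..} x * f x) = L - F m"
    by (simp add: interval_integral_to_infinity_eq set_lebesgue_integral_def)
  moreover have "(LINT x|lborel. indicator {m<..} x * f x) = (LINT x|lborel. indicator {m..} x * f x)"
    by (rule integral_cong_AE) (auto intro!: eventually_mono[OF AE_lborel_singleton[of m]] simp: indicator_def)
  ultimately show ?thesis by simp
qed

lemma phi_def': "std_normal_density x = exp (- (x\<^sup>2) / 2) / sqrt (2 * pi)"
  by (simp add: std_normal_density_def)

lemma phi_deriv: "(std_normal_density has_real_derivative (- x * std_normal_density x)) (at x)"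
proof -
  have "((\<lambda>x. exp (- (x\<^sup>2) / 2) / sqrt (2 * pi)) has_real_derivative (- x * (exp (- (x\<^sup>2) / 2) / sqrt (2 * pi)))) (at x)"
    by (auto intro!: derivative_eq_intros simp: field_simps)
  then show ?thesis unfolding phi_def'[abs_def] by simp
qed

lemma phi_cont: "isCont std_normal_density x"
  unfolding phi_def'[abs_def] by (intro continuous_intros) auto

lemma phi_lim: "((\<lambda>x. (a * x + b) * std_normal_density x) \<longlongrightarrow> 0) at_top"
proof -
  have l1: "((\<lambda>x::real. x * exp (- (x\<^sup>2) / 2)) \<longlongrightarrow> 0) at_top" by real_asymp
  have l2: "((\<lambda>x::real. exp (- (x\<^sup>2) / 2)) \<longlongrightarrow> 0) at_top" by real_asymp
  have "((\<lambda>x. (a * (x * exp (- (x\<^sup>2) / 2)) + b * exp (- (x\<^sup>2) / 2)) / sqrt (2 * pi)) \<longlongrightarrow> (a * 0 + b * 0) / sqrt (2 * pi)) at_top"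
    by (intro tendsto_intros l1 l2) auto
  then show ?thesis by (simp add: phi_def' algebra_simps)
qed

lemma phi_int: "integrable lborel (\<lambda>x. std_normal_density x * (a * x\<^sup>2 + b * x + c))"
proof -
  have "integrable lborel (\<lambda>x. a * (std_normal_density x * x ^ 2) + b * (std_normal_density x * x ^ 1) + c * (std_normal_density x * x ^ 0))"
    using integrable_std_normal_moment[of 2] integrable_std_normal_moment[of 1] integrable_std_normal_moment[of 0]
    by (intro Bochner_Integration.integrable_add integrable_mult_right) auto
  then show ?thesis by (simp add: algebra_simps)
qed

lemma inner_int:
  assumes r: "\<rho> > 0"
  shows "(LINT x|lborel. indicator {m..} x * (std_normal_density x * (x * (\<rho> * x + t) - \<rho>)))
      = std_normal_density m * (\<rho> * m + t)"
proof -
  have "(LINT x|lborel. indicator {m..} x * (std_normal_density x * (x * (\<rho> * x + t) - \<rho>)))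
      = 0 - (- (\<rho> * m + t) * std_normal_density m)"
  proof (rule ftc_Ici)
    fix x
    show "((\<lambda>x. - (\<rho> * x + t) * std_normal_density x) has_real_derivative
        (std_normal_density x * (x * (\<rho> * x + t) - \<rho>))) (at x)"
      by (auto intro!: derivative_eq_intros phi_deriv simp: algebra_simps)
    show "isCont (\<lambda>x. std_normal_density x * (x * (\<rho> * x + t) - \<rho>)) x"
      by (intro continuous_intros phi_cont)
  next
    show "integrable lborel (\<lambda>x. std_normal_density x * (x * (\<rho> * x + t) - \<rho>))"
      using phi_int[of \<rho> t "-\<rho>"] by (simp add: algebra_simps power2_eq_square)
    show "((\<lambda>x. - (\<rho> * x + t) * std_normal_density x) \<longlongrightarrow> 0) at_top"
      using phi_lim[of "-\<rho>" "-t"] by (simp add: algebra_simps)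
  qed
  then show ?thesis by (simp add: algebra_simps)
qed

lemma half_int: "(LINT x|lborel. indicator {m..} x * (std_normal_density x * x)) = std_normal_density m"
proof -
  have "(LINT x|lborel. indicator {m..} x * (std_normal_density x * x)) = 0 - (- std_normal_density m)"
  proof (rule ftc_Ici)
    fix x
    show "((\<lambda>x. - std_normal_density x) has_real_derivative (std_normal_density x * x)) (at x)"
      by (auto intro!: derivative_eq_intros phi_deriv simp: algebra_simps)
    show "isCont (\<lambda>x. std_normal_density x * x) x"
      by (intro continuous_intros phi_cont)
  next
    show "integrable lborel (\<lambda>x. std_normal_density x * x)"
      using integrable_std_normal_moment[of 1] by simp
    show "((\<lambda>x. - std_normal_density x) \<longlongrightarrow> 0) at_top"
      using phi_lim[of 0 "-1"] by simp
  qed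
  then show ?thesis by simp
qed

context gpair
begin

lemma core_T:
  assumes r: "0 < \<rho>" and sp: "0 < s"
  shows "(\<integral>\<omega>. indicator {0..} (X \<omega>) * indicator {0..} (\<rho> * X \<omega> + s * W \<omega>) * (X \<omega> * (\<rho> * X \<omega> + s * W \<omega>) - \<rho>) \<partial>M)
      = s * (std_normal_density 0)\<^sup>2"
proof -
  define G where "G p = indicator {0..} (snd p) * indicator {0..} (\<rho> * snd p + s * fst p) * (snd p * (\<rho> * snd p + s * fst p) - \<rho>)" for p :: "real \<times> real"
  let ?N = std_normal_distribution
  interpret N: prob_space ?N using real_dist_normal_dist by (simp add: real_distribution_def)
  interpret P: pair_prob_space ?N ?N ..
  have Gm[measurable]: "G \<in> borel_measurable (lborel \<Otimes>\<^sub>M lborel)" unfolding G_def by measurable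
  have Gm2[measurable]: "G \<in> borel_measurable (?N \<Otimes>\<^sub>M ?N)"
    using Gm by (simp add: measurable_def space_pair_measure sets_pair_measure_cong[of ?N lborel ?N lborel])
  have WXm[measurable]: "(\<lambda>\<omega>. (W \<omega>, X \<omega>)) \<in> measurable M (lborel \<Otimes>\<^sub>M lborel)" by measurable
  have LHS: "(\<integral>\<omega>. indicator {0..} (X \<omega>) * indicator {0..} (\<rho> * X \<omega> + s * W \<omega>) * (X \<omega> * (\<rho> * X \<omega> + s * W \<omega>) - \<rho>) \<partial>M)
      = (\<integral>\<omega>. G (W \<omega>, X \<omega>) \<partial>M)" by (simp add: G_def)
  have intM: "integrable M (\<lambda>\<omega>. G (W \<omega>, X \<omega>))"
  proof (rule Bochner_Integration.integrable_bound[of _ "\<lambda>\<omega>. \<rho> * (X \<omega> * X \<omega>) + s * (X \<omega> * X \<omega> + W \<omega> * W \<omega>) + \<rho>"])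
    show "integrable M (\<lambda>\<omega>. \<rho> * (X \<omega> * X \<omega>) + s * (X \<omega> * X \<omega> + W \<omega> * W \<omega>) + \<rho>)"
      using int_XX int_WW by auto
    show "(\<lambda>\<omega>. G (W \<omega>, X \<omega>)) \<in> borel_measurable M" by measurable
    show "AE \<omega> in M. norm (G (W \<omega>, X \<omega>)) \<le> norm (\<rho> * (X \<omega> * X \<omega>) + s * (X \<omega> * X \<omega> + W \<omega> * W \<omega>) + \<rho>)"
    proof (intro AE_I2)
      fix \<omega>
      have b1: "\<bar>X \<omega> * W \<omega>\<bar> \<le> X \<omega> * X \<omega> + W \<omega> * W \<omega>" by (rule abs_prod_le)
      have "\<bar>G (W \<omega>, X \<omega>)\<bar> \<le> \<bar>X \<omega> * (\<rho> * X \<omega> + s * W \<omega>) - \<rho>\<bar>"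
        unfolding G_def by (simp add: indicator_def abs_mult)
      also have "\<dots> \<le> \<rho> * (X \<omega> * X \<omega>) + s * \<bar>X \<omega> * W \<omega>\<bar> + \<rho>"
      proof -
        have t1: "\<bar>X \<omega> * (\<rho> * X \<omega> + s * W \<omega>) - \<rho>\<bar> \<le> \<bar>X \<omega> * (\<rho> * X \<omega> + s * W \<omega>)\<bar> + \<bar>\<rho>\<bar>"
          by (rule abs_triangle_ineq4)
        have e: "X \<omega> * (\<rho> * X \<omega> + s * W \<omega>) = \<rho> * (X \<omega> * X \<omega>) + s * (X \<omega> * W \<omega>)"
          by (simp add: algebra_simps)
        have t2: "\<bar>\<rho> * (X \<omega> * X \<omega>) + s * (X \<omega> * W \<omega>)\<bar> \<le> \<bar>\<rho> * (X \<omega> * X \<omega>)\<bar> + \<bar>s * (X \<omega> * W \<omega>)\<bar>"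
          by (rule abs_triangle_ineq)
        have e2: "\<bar>\<rho> * (X \<omega> * X \<omega>)\<bar> = \<rho> * (X \<omega> * X \<omega>)" using r by (simp add: abs_mult)
        have e3: "\<bar>s * (X \<omega> * W \<omega>)\<bar> = s * \<bar>X \<omega> * W \<omega>\<bar>" using sp by (simp add: abs_mult)
        have e4: "\<bar>\<rho>\<bar> = \<rho>" using r by simp
        show ?thesis using t1 t2 unfolding e e2 e3 e4 by linarith
      qed
      also have "\<dots> \<le> \<rho> * (X \<omega> * X \<omega>) + s * (X \<omega> * X \<omega> + W \<omega> * W \<omega>) + \<rho>"
        using b1 sp by (simp add: mult_left_mono)
      finally show "norm (G (W \<omega>, X \<omega>)) \<le> norm (\<rho> * (X \<omega> * X \<omega>) + s * (X \<omega> * X \<omega> + W \<omega> * W \<omega>) + \<rho>)"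
        by simp
    qed
  qed
  have intP: "integrable (?N \<Otimes>\<^sub>M ?N) G"
  proof -
    have "integrable (distr M (lborel \<Otimes>\<^sub>M lborel) (\<lambda>\<omega>. (W \<omega>, X \<omega>))) G"
      using intM by (subst integrable_distr_eq) auto
    then show ?thesis by (simp add: joint_law)
  qed
  have "(\<integral>\<omega>. G (W \<omega>, X \<omega>) \<partial>M) = integral\<^sup>L (distr M (lborel \<Otimes>\<^sub>M lborel) (\<lambda>\<omega>. (W \<omega>, X \<omega>))) G"
    by (rule integral_distr[symmetric]) auto
  also have "\<dots> = integral\<^sup>L (?N \<Otimes>\<^sub>M ?N) G" by (simp add: joint_law)
  also have "\<dots> = (\<integral>w. (\<integral>x. G (w, x) \<partial>?N) \<partial>?N)" by (rule P.integral_fst'[OF intP, symmetric])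
  also have "\<dots> = (\<integral>w. (if 0 \<le> w then std_normal_density 0 * (s * w) else 0) \<partial>?N)"
  proof (rule Bochner_Integration.integral_cong[OF refl])
    fix w
    define m where "m = max 0 (- (s * w) / \<rho>)"
    have ind: "indicator {0..} x * indicator {0..} (\<rho> * x + s * w) = (indicator {m..} x :: real)" for x
    proof -
      have e: "(- (s * w) / \<rho> \<le> x) = (- (s * w) \<le> x * \<rho>)" by (rule pos_divide_le_eq[OF r])
      have "(0 \<le> \<rho> * x + s * w) \<longleftrightarrow> (- (s * w) \<le> x * \<rho>)"
        unfolding mult.commute[of x \<rho>] by linarith
      then have "(0 \<le> \<rho> * x + s * w) \<longleftrightarrow> (- (s * w) / \<rho> \<le> x)" using e by simp
      then show ?thesis by (simp add: indicator_def m_def)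
    qed
    have "(\<integral>x. G (w, x) \<partial>?N) = (LINT x|lborel. std_normal_density x * G (w, x))"
      by (subst integral_density) auto
    also have "\<dots> = (LINT x|lborel. indicator {m..} x * (std_normal_density x * (x * (\<rho> * x + s * w) - \<rho>)))"
      by (rule Bochner_Integration.integral_cong[OF refl]) (simp add: G_def ind[symmetric] algebra_simps)
    also have "\<dots> = std_normal_density m * (\<rho> * m + s * w)" by (rule inner_int[OF r])
    also have "\<dots> = (if 0 \<le> w then std_normal_density 0 * (s * w) else 0)"
    proof (cases "0 \<le> w")
      case True
      then have "- (s * w) / \<rho> \<le> 0" using r sp by (simp add: divide_nonpos_pos)
      then have "m = 0" by (simp add: m_def)
      then show ?thesis using True by simp
    next
      case False
      then have "s * w < 0" using sp by (intro mult_pos_neg) auto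
      then have "- (s * w) / \<rho> > 0" using r by (intro divide_pos_pos) auto
      then have "m = - (s * w) / \<rho>" by (simp add: m_def)
      then have "\<rho> * m + s * w = 0" using r by simp
      then show ?thesis using False by simp
    qed
    finally show "(\<integral>x. G (w, x) \<partial>?N) = (if 0 \<le> w then std_normal_density 0 * (s * w) else 0)" .
  qed
  also have "\<dots> = (LINT w|lborel. std_normal_density w * (if 0 \<le> w then std_normal_density 0 * (s * w) else 0))"
    by (subst integral_density) auto
  also have "\<dots> = (LINT w|lborel. (std_normal_density 0 * s) * (indicator {0..} w * (std_normal_density w * w)))"
    by (rule Bochner_Integration.integral_cong[OF refl]) (simp add: indicator_def)
  also have "\<dots> = (std_normal_density 0 * s) * std_normal_density 0"
    using half_int[of 0] by simp
  finally show ?thesis using LHS by (simp add: power2_eq_square)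
qed

lemma EX_fun: "(\<integral>\<omega>. h (X \<omega>) \<partial>M) = (LINT x|lborel. std_normal_density x * h x)"
  if [measurable]: "h \<in> borel_measurable borel" for h :: "real \<Rightarrow> real"
proof -
  have "(\<integral>\<omega>. h (X \<omega>) \<partial>M) = integral\<^sup>L (distr M lborel X) h"
    by (rule integral_distr[symmetric]) auto
  also have "\<dots> = integral\<^sup>L std_normal_distribution h" by (simp add: distrX)
  also have "\<dots> = (LINT x|lborel. std_normal_density x * h x)"
    by (subst integral_density) auto
  finally show ?thesis .
qed

lemma pos_sq: "(\<integral>\<omega>. indicator {0..} (X \<omega>) * (X \<omega> * X \<omega> - 1) \<partial>M) = 0"
proof -
  have "(\<integral>\<omega>. indicator {0..} (X \<omega>) * (X \<omega> * X \<omega> - 1) \<partial>M)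
      = (LINT x|lborel. std_normal_density x * (indicator {0..} x * (x * x - 1)))"
    by (rule EX_fun) measurable
  also have "\<dots> = (LINT x|lborel. indicator {0..} x * (std_normal_density x * (x * (1 * x + 0) - 1)))"
    by (rule Bochner_Integration.integral_cong) (auto simp: algebra_simps)
  also have "\<dots> = std_normal_density 0 * (1 * 0 + 0)" by (rule inner_int) simp
  finally show ?thesis by simp
qed

lemma pos_first: "(\<integral>\<omega>. indicator {0..} (X \<omega>) * X \<omega> \<partial>M) = std_normal_density 0"
proof -
  have "(\<integral>\<omega>. indicator {0..} (X \<omega>) * X \<omega> \<partial>M)
      = (LINT x|lborel. std_normal_density x * (indicator {0..} x * x))"
    by (rule EX_fun) measurable
  also have "\<dots> = (LINT x|lborel. indicator {0..} x * (std_normal_density x * x))"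
    by (rule Bochner_Integration.integral_cong) (auto simp: algebra_simps)
  also have "\<dots> = std_normal_density 0" by (rule half_int)
  finally show ?thesis .
qed

end



lemma sq_integrable:
  fixes Z :: "'a \<Rightarrow> real"
  assumes M: "prob_space M" and Zm[measurable]: "Z \<in> borel_measurable M" and E: "(\<integral>\<omega>. Z \<omega> * Z \<omega> \<partial>M) = 1"
  shows "integrable M (\<lambda>\<omega>. Z \<omega> * Z \<omega>)" "integrable M Z"
proof -
  interpret prob_space M by fact
  show i: "integrable M (\<lambda>\<omega>. Z \<omega> * Z \<omega>)" using E not_integrable_integral_eq by fastforce
  show "integrable M Z"
  proof (rule Bochner_Integration.integrable_bound[of _ "\<lambda>\<omega>. 1 + Z \<omega> * Z \<omega>"])
    show "integrable M (\<lambda>\<omega>. 1 + Z \<omega> * Z \<omega>)" using i by simp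
    show "AE x in M. norm (Z x) \<le> norm (1 + Z x * Z x)"
      by (auto intro!: AE_I2 abs_le_sq)
  qed simp
qed

lemma prod_integrable:
  fixes Z Y :: "'a \<Rightarrow> real"
  assumes Zm[measurable]: "Z \<in> borel_measurable M" and Ym[measurable]: "Y \<in> borel_measurable M"
    and "integrable M (\<lambda>\<omega>. Z \<omega> * Z \<omega>)" "integrable M (\<lambda>\<omega>. Y \<omega> * Y \<omega>)"
  shows "integrable M (\<lambda>\<omega>. Z \<omega> * Y \<omega>)"
proof (rule Bochner_Integration.integrable_bound[of _ "\<lambda>\<omega>. Z \<omega> * Z \<omega> + Y \<omega> * Y \<omega>"])
  show "integrable M (\<lambda>\<omega>. Z \<omega> * Z \<omega> + Y \<omega> * Y \<omega>)" using assms by simp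
  show "AE x in M. norm (Z x * Y x) \<le> norm (Z x * Z x + Y x * Y x)"
    using abs_prod_le by (intro AE_I2) (metis abs_of_nonneg real_norm_def add_nonneg_nonneg zero_le_square)
qed simp

lemma pi_bound: "(1 + \<rho>) > 4 * pi\<^sup>2 * (1 - \<rho>)" if "99/100 < \<rho>" "\<rho> < 1" for \<rho> :: real
proof -
  have "pi\<^sup>2 \<le> 4\<^sup>2" using pi_less_4 pi_gt_zero by (intro power_mono) auto
  then have "4 * pi\<^sup>2 * (1 - \<rho>) \<le> 64 * (1 - \<rho>)" using that by (intro mult_right_mono) auto
  moreover have "64 * (1 - \<rho>) < 1 + \<rho>" using that by (simp add: algebra_simps)
  ultimately show ?thesis by linarith
qed

lemma s_bound:
  assumes "99/100 < \<rho>" "\<rho> < 1"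
  shows "1 - \<rho> < sqrt (1 - \<rho>\<^sup>2) / (2 * pi)"
proof -
  have a: "0 < 1 - \<rho>" using assms by simp
  have "(2 * pi * (1 - \<rho>))\<^sup>2 = (1 - \<rho>) * (4 * pi\<^sup>2 * (1 - \<rho>))" by (simp add: power2_eq_square algebra_simps)
  also have "\<dots> < (1 - \<rho>) * (1 + \<rho>)" using pi_bound[OF assms] a by (intro mult_strict_left_mono) auto
  also have "\<dots> = 1 - \<rho>\<^sup>2" by (simp add: power2_eq_square algebra_simps)
  finally have "2 * pi * (1 - \<rho>) < sqrt (1 - \<rho>\<^sup>2)" using a by (intro real_less_rsqrt) simp
  then show ?thesis by (simp add: field_simps)
qed

lemma phi0_sq: "(std_normal_density 0)\<^sup>2 = 1 / (2 * pi)"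
  by (simp add: std_normal_density_def power2_eq_square real_sqrt_mult_self)

lemma phi0_pos: "0 < std_normal_density 0"
  by (simp add: std_normal_density_def)

lemma null_int:
  fixes f :: "'a \<Rightarrow> real"
  assumes "prob_space M" "S \<in> sets M" "measure M S = 0"
  shows "(\<integral>\<omega>. indicator S \<omega> * f \<omega> \<partial>M) = 0"
proof -
  interpret prob_space M by fact
  have "S \<in> null_sets M" using assms(2,3) by (simp add: null_sets_def emeasure_eq_measure)
  then have "AE \<omega> in M. \<omega> \<notin> S" by (rule AE_not_in)
  then have "AE \<omega> in M. indicator S \<omega> * f \<omega> = 0" by eventually_elim auto
  then show ?thesis by (rule integral_eq_zero_AE)
qed

lemma key:
  fixes M :: "'a measure" and X Y :: "'a \<Rightarrow> real" and \<rho> :: real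
  assumes M: "prob_space M" and Xm[measurable]: "X \<in> borel_measurable M" and Ym[measurable]: "Y \<in> borel_measurable M"
    and G: "\<And>u v. gaussian_rv M (\<lambda>\<omega>. u * X \<omega> + v * Y \<omega>)"
    and EX: "(\<integral>\<omega>. X \<omega> \<partial>M) = 0" and EY: "(\<integral>\<omega>. Y \<omega> \<partial>M) = 0"
    and EXX: "(\<integral>\<omega>. X \<omega> * X \<omega> \<partial>M) = 1" and EYY: "(\<integral>\<omega>. Y \<omega> * Y \<omega> \<partial>M) = 1"
    and EXY: "(\<integral>\<omega>. X \<omega> * Y \<omega> \<partial>M) = \<rho>"
    and r1: "99/100 < \<rho>" and r2: "\<rho> < 1"
  shows "cond_exp_ev M (\<lambda>\<omega>. X \<omega> * X \<omega>) {\<omega>\<in>space M. X \<omega> \<ge> 0 \<and> X \<omega> \<ge> 0}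
       < cond_exp_ev M (\<lambda>\<omega>. X \<omega> * Y \<omega>) {\<omega>\<in>space M. X \<omega> \<ge> 0 \<and> Y \<omega> \<ge> 0}"
    and "0 < cond_exp_ev M X {\<omega>\<in>space M. X \<omega> \<ge> 0}"
proof -
  interpret prob_space M by fact
  define s where "s = sqrt (1 - \<rho>\<^sup>2)"
  have "\<rho> * \<rho> < 1 * 1" using r1 r2 by (intro mult_strict_mono) auto
  then have rr: "\<rho>\<^sup>2 < 1" by (simp add: power2_eq_square)
  then have sp: "0 < s" and ss: "s\<^sup>2 = 1 - \<rho>\<^sup>2" unfolding s_def by auto
  have rp: "0 < \<rho>" using r1 by simp
  define W where "W \<omega> = (Y \<omega> - \<rho> * X \<omega>) / s" for \<omega>
  have Wm[measurable]: "W \<in> borel_measurable M" unfolding W_def by measurable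
  have YW: "Y \<omega> = \<rho> * X \<omega> + s * W \<omega>" for \<omega> using sp by (simp add: W_def)
  have iXX: "integrable M (\<lambda>\<omega>. X \<omega> * X \<omega>)" and iX: "integrable M X" using sq_integrable[OF M Xm EXX] by auto
  have iYY: "integrable M (\<lambda>\<omega>. Y \<omega> * Y \<omega>)" and iY: "integrable M Y" using sq_integrable[OF M Ym EYY] by auto
  have iXY: "integrable M (\<lambda>\<omega>. X \<omega> * Y \<omega>)" by (rule prod_integrable[OF Xm Ym iXX iYY])
  interpret gp: gpair M X W
  proof
    show "X \<in> borel_measurable M" "W \<in> borel_measurable M" by simp_all
    show "gaussian_rv M (\<lambda>\<omega>. u * X \<omega> + v * W \<omega>)" for u v
    proof -
      have "(\<lambda>\<omega>. u * X \<omega> + v * W \<omega>) = (\<lambda>\<omega>. (u - v * \<rho> / s) * X \<omega> + (v / s) * Y \<omega>)"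
        using sp by (auto simp: W_def field_simps)
      then show ?thesis using G[of "u - v * \<rho> / s" "v / s"] by (simp only:)
    qed
    show "(\<integral>\<omega>. X \<omega> \<partial>M) = 0" by (rule EX)
    show "(\<integral>\<omega>. X \<omega> * X \<omega> \<partial>M) = 1" by (rule EXX)
    show "(\<integral>\<omega>. W \<omega> \<partial>M) = 0"
      unfolding W_def using iX iY EX EY by simp
    have "(\<integral>\<omega>. W \<omega> * W \<omega> \<partial>M) = (\<integral>\<omega>. (Y \<omega> * Y \<omega> - 2 * \<rho> * (X \<omega> * Y \<omega>) + \<rho>\<^sup>2 * (X \<omega> * X \<omega>)) / s\<^sup>2 \<partial>M)"
      by (rule Bochner_Integration.integral_cong) (auto simp: W_def power2_eq_square field_simps)
    also have "\<dots> = (1 - 2 * \<rho> * \<rho> + \<rho>\<^sup>2 * 1) / s\<^sup>2"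
      using iXX iYY iXY EXX EYY EXY by simp
    also have "\<dots> = 1" using ss rr by (simp add: power2_eq_square)
    finally show "(\<integral>\<omega>. W \<omega> * W \<omega> \<partial>M) = 1" .
    have "(\<integral>\<omega>. X \<omega> * W \<omega> \<partial>M) = (\<integral>\<omega>. (X \<omega> * Y \<omega> - \<rho> * (X \<omega> * X \<omega>)) / s \<partial>M)"
      by (rule Bochner_Integration.integral_cong) (auto simp: W_def field_simps)
    also have "\<dots> = (\<rho> - \<rho> * 1) / s" using iXX iXY EXX EXY by simp
    finally show "(\<integral>\<omega>. X \<omega> * W \<omega> \<partial>M) = 0" by simp
  qed
  have T: "(\<integral>\<omega>. indicator {0..} (X \<omega>) * indicator {0..} (Y \<omega>) * (X \<omega> * Y \<omega> - \<rho>) \<partial>M) = s / (2 * pi)"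
    using gp.core_T[OF rp sp] unfolding YW[symmetric] phi0_sq by simp
  define S where "S = {\<omega>\<in>space M. X \<omega> \<ge> 0 \<and> Y \<omega> \<ge> 0}"
  have Sm[measurable]: "S \<in> sets M" unfolding S_def by measurable
  define P where "P = measure M S"
  have indS: "indicator S \<omega> = indicator {0..} (X \<omega>) * (indicator {0..} (Y \<omega>) :: real)" if "\<omega> \<in> space M" for \<omega>
    using that by (auto simp: S_def indicator_def)
  define num where "num = (\<integral>\<omega>. indicator S \<omega> * (X \<omega> * Y \<omega>) \<partial>M)"
  have iI: "integrable M (\<lambda>\<omega>. indicator {0..} (X \<omega>) * indicator {0..} (Y \<omega>) :: real)"
    by (rule gp.int_bdd[of _ 1]) (auto simp: indicator_def)
  have iIXY: "integrable M (\<lambda>\<omega>. indicator {0..} (X \<omega>) * indicator {0..} (Y \<omega>) * (X \<omega> * Y \<omega>))"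
    by (rule Bochner_Integration.integrable_bound[OF iXY]) (auto simp: indicator_def)
  have "num = (\<integral>\<omega>. indicator {0..} (X \<omega>) * indicator {0..} (Y \<omega>) * (X \<omega> * Y \<omega>) \<partial>M)"
    unfolding num_def by (rule Bochner_Integration.integral_cong) (auto simp: indS)
  moreover have "P = (\<integral>\<omega>. indicator {0..} (X \<omega>) * indicator {0..} (Y \<omega>) \<partial>M)"
  proof -
    have "P = (\<integral>\<omega>. indicator S \<omega> \<partial>M)" by (simp add: P_def)
    also have "\<dots> = (\<integral>\<omega>. indicator {0..} (X \<omega>) * indicator {0..} (Y \<omega>) \<partial>M)"
      by (rule Bochner_Integration.integral_cong) (auto simp: indS)
    finally show ?thesis .
  qed
  moreover have "(\<integral>\<omega>. indicator {0..} (X \<omega>) * indicator {0..} (Y \<omega>) * (X \<omega> * Y \<omega> - \<rho>) \<partial>M)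
      = (\<integral>\<omega>. indicator {0..} (X \<omega>) * indicator {0..} (Y \<omega>) * (X \<omega> * Y \<omega>) \<partial>M)
        - \<rho> * (\<integral>\<omega>. indicator {0..} (X \<omega>) * indicator {0..} (Y \<omega>) \<partial>M)"
    using iI iIXY by (simp add: right_diff_distrib)
  ultimately have numP: "num = s / (2 * pi) + \<rho> * P" using T by simp
  have P1: "P \<le> 1" unfolding P_def by simp
  have P0: "0 \<le> P" unfolding P_def by simp
  have sb: "1 - \<rho> < s / (2 * pi)" unfolding s_def by (rule s_bound[OF r1 r2])
  have "(1 - \<rho>) * P \<le> (1 - \<rho>) * 1" using P1 r2 by (intro mult_left_mono) auto
  then have gap: "P < num" using numP sb by (simp add: algebra_simps)
  have Ppos: "0 < P"
  proof (rule ccontr)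
    assume "\<not> 0 < P"
    then have "P = 0" using P0 by simp
    then have "num = 0" unfolding num_def P_def by (intro null_int[OF M Sm]) simp
    with gap \<open>P = 0\<close> show False by simp
  qed
  have rhs: "1 < cond_exp_ev M (\<lambda>\<omega>. X \<omega> * Y \<omega>) {\<omega>\<in>space M. X \<omega> \<ge> 0 \<and> Y \<omega> \<ge> 0}"
    unfolding cond_exp_ev_def S_def[symmetric] num_def[symmetric] P_def[symmetric]
    using gap Ppos by simp
  define S0 where "S0 = {\<omega>\<in>space M. X \<omega> \<ge> 0}"
  have S0m[measurable]: "S0 \<in> sets M" unfolding S0_def by measurable
  define P0' where "P0' = measure M S0"
  have indS0: "indicator S0 \<omega> = (indicator {0..} (X \<omega>) :: real)" if "\<omega> \<in> space M" for \<omega>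
    using that by (auto simp: S0_def indicator_def)
  have iI0: "integrable M (\<lambda>\<omega>. indicator {0..} (X \<omega>) :: real)"
    by (rule gp.int_bdd[of _ 1]) (auto simp: indicator_def)
  have iI0XX: "integrable M (\<lambda>\<omega>. indicator {0..} (X \<omega>) * (X \<omega> * X \<omega>))"
    by (rule Bochner_Integration.integrable_bound[OF iXX]) (auto simp: indicator_def)
  have P0eq: "P0' = (\<integral>\<omega>. indicator {0..} (X \<omega>) \<partial>M)"
  proof -
    have "P0' = (\<integral>\<omega>. indicator S0 \<omega> \<partial>M)" by (simp add: P0'_def)
    also have "\<dots> = (\<integral>\<omega>. indicator {0..} (X \<omega>) \<partial>M)"
      by (rule Bochner_Integration.integral_cong) (auto simp: indS0)
    finally show ?thesis .
  qed
  have num0: "(\<integral>\<omega>. indicator S0 \<omega> * (X \<omega> * X \<omega>) \<partial>M) = P0'"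
  proof -
    have "(\<integral>\<omega>. indicator S0 \<omega> * (X \<omega> * X \<omega>) \<partial>M) = (\<integral>\<omega>. indicator {0..} (X \<omega>) * (X \<omega> * X \<omega>) \<partial>M)"
      by (rule Bochner_Integration.integral_cong) (auto simp: indS0)
    also have "\<dots> = (\<integral>\<omega>. indicator {0..} (X \<omega>) * (X \<omega> * X \<omega> - 1) \<partial>M) + (\<integral>\<omega>. indicator {0..} (X \<omega>) \<partial>M)"
      using iI0 iI0XX by (simp add: right_diff_distrib)
    also have "\<dots> = P0'" using gp.pos_sq P0eq by simp
    finally show ?thesis .
  qed
  have first0: "(\<integral>\<omega>. indicator S0 \<omega> * X \<omega> \<partial>M) = std_normal_density 0"
  proof -
    have "(\<integral>\<omega>. indicator S0 \<omega> * X \<omega> \<partial>M) = (\<integral>\<omega>. indicator {0..} (X \<omega>) * X \<omega> \<partial>M)"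
      by (rule Bochner_Integration.integral_cong) (auto simp: indS0)
    also have "\<dots> = std_normal_density 0" by (rule gp.pos_first)
    finally show ?thesis .
  qed
  have P0pos: "0 < P0'"
  proof (rule ccontr)
    assume "\<not> 0 < P0'"
    then have "P0' = 0" using measure_nonneg[of M S0] unfolding P0'_def by linarith
    then have "(\<integral>\<omega>. indicator S0 \<omega> * X \<omega> \<partial>M) = 0" unfolding P0'_def by (intro null_int[OF M S0m]) simp
    with first0 phi0_pos show False by simp
  qed
  have S0S0: "{\<omega>\<in>space M. X \<omega> \<ge> 0 \<and> X \<omega> \<ge> 0} = S0" by (auto simp: S0_def)
  have lhs: "cond_exp_ev M (\<lambda>\<omega>. X \<omega> * X \<omega>) {\<omega>\<in>space M. X \<omega> \<ge> 0 \<and> X \<omega> \<ge> 0} = 1"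
    unfolding cond_exp_ev_def S0S0 num0 P0'_def[symmetric] using P0pos by simp
  show "cond_exp_ev M (\<lambda>\<omega>. X \<omega> * X \<omega>) {\<omega>\<in>space M. X \<omega> \<ge> 0 \<and> X \<omega> \<ge> 0}
       < cond_exp_ev M (\<lambda>\<omega>. X \<omega> * Y \<omega>) {\<omega>\<in>space M. X \<omega> \<ge> 0 \<and> Y \<omega> \<ge> 0}"
    using lhs rhs by simp
  show "0 < cond_exp_ev M X {\<omega>\<in>space M. X \<omega> \<ge> 0}"
    unfolding cond_exp_ev_def S0_def[symmetric] first0 P0'_def[symmetric] using P0pos phi0_pos by simp
qed

lemma field_meas:
  assumes "gaussian_field M Z"
  shows "Z x \<in> borel_measurable M"
proof -
  have "gaussian_rv M (\<lambda>\<omega>. \<Sum>y\<in>{x}. (\<lambda>_. 1) y * Z y \<omega>)"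
    using assms[unfolded gaussian_field_def, rule_format, of "{x}" "\<lambda>_. 1"] by simp
  then show ?thesis by (simp add: gaussian_rv_def)
qed

lemma field_pair:
  assumes "gaussian_field M Z" "x \<noteq> y"
  shows "gaussian_rv M (\<lambda>\<omega>. u * Z x \<omega> + v * Z y \<omega>)"
proof -
  have "gaussian_rv M (\<lambda>\<omega>. \<Sum>z\<in>{x, y}. (\<lambda>z. if z = x then u else v) z * Z z \<omega>)"
    using assms(1)[unfolded gaussian_field_def, rule_format, of "{x, y}" "\<lambda>z. if z = x then u else v"] by simp
  then show ?thesis using assms(2) by simp
qed

lemma kmm_nonneg:
  assumes "prob_space M"
  shows "0 \<le> kmm M Z h"
proof -
  interpret prob_space M by fact
  have "0 \<le> (\<integral>\<omega>. indicator {\<omega> \<in> space M. 0 \<le> Z 0 \<omega> \<and> 0 \<le> Z h \<omega>} \<omega> * (Z 0 \<omega> * Z h \<omega>) \<partial>M)"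
    by (rule Bochner_Integration.integral_nonneg) (auto simp: indicator_def)
  then have "0 \<le> cond_exp_ev M (\<lambda>\<omega>. Z 0 \<omega> * Z h \<omega>) {\<omega> \<in> space M. 0 \<le> Z 0 \<omega> \<and> 0 \<le> Z h \<omega>}"
    unfolding cond_exp_ev_def by simp
  then show ?thesis unfolding kmm_def by simp
qed

theorem proposition4p4:
  fixes M :: "'a measure"
    and Z :: "real ^ 'd \<Rightarrow> 'a \<Rightarrow> real"
    and R :: "real \<Rightarrow> real"
  assumes "prob_space M"
    and "gaussian_field M Z"
    and "\<And>x. (\<integral>\<omega>. Z x \<omega> \<partial>M) = 0"
    and "\<And>x y. (\<integral>\<omega>. Z x \<omega> * Z y \<omega> \<partial>M) = R (norm (x - y))"
    and "R 0 = 1"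
    and "continuous_on {0..} R"
  shows "positive_definite (kmm M Z) \<longleftrightarrow> (\<forall>t\<ge>0. R t = 1)"
proof -
  note M = assms(1) and GF = assms(2) and E1 = assms(3) and E2 = assms(4) and R0 = assms(5) and Rc = assms(6)
  interpret prob_space M by (rule M)
  have Zm[measurable]: "Z x \<in> borel_measurable M" for x :: "real ^ 'd" by (rule field_meas[OF GF])
  have EZZ: "(\<integral>\<omega>. Z x \<omega> * Z x \<omega> \<partial>M) = 1" for x :: "real ^ 'd" using E2[of x x] R0 by simp
  have iZZ: "integrable M (\<lambda>\<omega>. Z x \<omega> * Z x \<omega>)" for x :: "real ^ 'd" using sq_integrable[OF M Zm EZZ] by simp
  have iZ: "integrable M (Z x)" for x :: "real ^ 'd" using sq_integrable[OF M Zm EZZ] by simp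
  have iZZ2: "integrable M (\<lambda>\<omega>. Z x \<omega> * Z y \<omega>)" for x y :: "real ^ 'd" by (rule prod_integrable[OF Zm Zm iZZ iZZ])
  have Ediff: "(\<integral>\<omega>. (Z x \<omega> - Z y \<omega>) * (Z x \<omega> - Z y \<omega>) \<partial>M) = 2 - 2 * R (norm (x - y))" for x y :: "real ^ 'd"
  proof -
    have "(\<integral>\<omega>. (Z x \<omega> - Z y \<omega>) * (Z x \<omega> - Z y \<omega>) \<partial>M)
        = (\<integral>\<omega>. Z x \<omega> * Z x \<omega> + Z y \<omega> * Z y \<omega> - 2 * (Z x \<omega> * Z y \<omega>) \<partial>M)"
      by (rule Bochner_Integration.integral_cong) (auto simp: algebra_simps)
    also have "\<dots> = 1 + 1 - 2 * R (norm (x - y))"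
      using iZZ[of x] iZZ[of y] iZZ2[of x y] EZZ[of x] EZZ[of y] E2[of x y] by simp
    finally show ?thesis by simp
  qed
  have Rle: "R (norm (x - y)) \<le> 1" for x y :: "real ^ 'd"
  proof -
    have "0 \<le> (\<integral>\<omega>. (Z x \<omega> - Z y \<omega>) * (Z x \<omega> - Z y \<omega>) \<partial>M)"
      by (rule Bochner_Integration.integral_nonneg) simp
    then show ?thesis using Ediff[of x y] by simp
  qed
  show ?thesis
  proof
    assume pd: "positive_definite (kmm M Z)"
    show "\<forall>t\<ge>0. R t = 1"
    proof (rule ccontr)
      assume "\<not> (\<forall>t\<ge>0. R t = 1)"
      then obtain t where t0: "0 \<le> t" and Rt: "R t \<noteq> 1" by blast
      define e :: "real ^ 'd" where "e = axis undefined 1"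
      have ne: "norm e = 1" by (simp add: e_def)
      have "R (norm (t *\<^sub>R e - 0)) \<le> 1" by (rule Rle)
      then have "R t \<le> 1" using t0 ne by simp
      with Rt have Rt1: "R t < 1" by simp
      define \<rho> where "\<rho> = (max (R t) (99/100) + 1) / 2"
      have r1: "99/100 < \<rho>" and r2: "\<rho> < 1" and r3: "R t \<le> \<rho>" using Rt1 by (auto simp: \<rho>_def)
      have "continuous_on {0..t} R" by (rule continuous_on_subset[OF Rc]) auto
      then obtain \<tau> where tau0: "0 \<le> \<tau>" and taut: "\<tau> \<le> t" and Rtau: "R \<tau> = \<rho>"
        using IVT2'[of R t \<rho> 0] r3 r2 R0 t0 by auto
      define h where "h = \<tau> *\<^sub>R e"
      have nh: "norm h = \<tau>" using tau0 ne by (simp add: h_def)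
      have "\<tau> \<noteq> 0" using Rtau R0 r2 by auto
      then have h0: "h \<noteq> 0" using nh by auto
      have cmp: "kmm M Z 0 < kmm M Z v" if vn: "norm v = \<tau>" for v :: "real ^ 'd"
      proof -
        have v0: "v \<noteq> 0" using vn \<open>\<tau> \<noteq> 0\<close> by auto
        have G': "gaussian_rv M (\<lambda>\<omega>. u * Z 0 \<omega> + w * Z v \<omega>)" for u w
          by (rule field_pair[OF GF]) (use v0 in auto)
        have Exy: "(\<integral>\<omega>. Z 0 \<omega> * Z v \<omega> \<partial>M) = \<rho>" using E2[of 0 v] vn Rtau by simp
        note k = key[OF M Zm Zm G' E1 E1 EZZ EZZ Exy r1 r2]
        have "0 < (cond_exp_ev M (Z 0) {\<omega>\<in>space M. Z 0 \<omega> \<ge> 0})\<^sup>2" using k(2) by simp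
        then show ?thesis unfolding kmm_def using k(1) by (simp add: divide_strict_right_mono)
      qed
      have c1: "kmm M Z 0 < kmm M Z h" by (rule cmp[OF nh])
      have c2: "kmm M Z 0 < kmm M Z (- h)" by (rule cmp) (simp add: nh)
      define xs :: "nat \<Rightarrow> real ^ 'd" where "xs i = (if i = 0 then h else 0)" for i
      define a :: "nat \<Rightarrow> real" where "a i = (if i = 0 then 1 else -1)" for i
      have "0 \<le> (\<Sum>i<2. \<Sum>j<2. a i * a j * kmm M Z (xs i - xs j))"
        using pd unfolding positive_definite_def by blast
      also have "\<dots> = 2 * kmm M Z 0 - kmm M Z h - kmm M Z (- h)"
        by (simp add: numeral_2_eq_2 a_def xs_def)
      finally show False using c1 c2 by simp
    qed
  next
    assume R1: "\<forall>t\<ge>0. R t = 1"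
    have ae: "AE \<omega> in M. Z h \<omega> = Z 0 \<omega>" for h :: "real ^ 'd"
    proof -
      have i: "integrable M (\<lambda>\<omega>. (Z h \<omega> - Z 0 \<omega>) * (Z h \<omega> - Z 0 \<omega>))"
      proof -
        have "integrable M (\<lambda>\<omega>. Z h \<omega> * Z h \<omega> + Z 0 \<omega> * Z 0 \<omega> - 2 * (Z h \<omega> * Z 0 \<omega>))"
          using iZZ[of h] iZZ[of 0] iZZ2[of h 0] by simp
        moreover have "(\<lambda>\<omega>. (Z h \<omega> - Z 0 \<omega>) * (Z h \<omega> - Z 0 \<omega>)) = (\<lambda>\<omega>. Z h \<omega> * Z h \<omega> + Z 0 \<omega> * Z 0 \<omega> - 2 * (Z h \<omega> * Z 0 \<omega>))"
          by (rule ext) (simp add: algebra_simps)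
        ultimately show ?thesis by (simp only:)
      qed
      have "(\<integral>\<omega>. (Z h \<omega> - Z 0 \<omega>) * (Z h \<omega> - Z 0 \<omega>) \<partial>M) = 0"
        using Ediff[of h 0] R1 by simp
      then have "AE \<omega> in M. (Z h \<omega> - Z 0 \<omega>) * (Z h \<omega> - Z 0 \<omega>) = 0"
        using integral_nonneg_eq_0_iff_AE[OF i] by simp
      then show ?thesis by eventually_elim simp
    qed
    have keq: "kmm M Z h = kmm M Z 0" for h :: "real ^ 'd"
    proof -
      let ?Sh = "{\<omega>\<in>space M. Z 0 \<omega> \<ge> 0 \<and> Z h \<omega> \<ge> 0}"
      let ?S0 = "{\<omega>\<in>space M. Z 0 \<omega> \<ge> 0 \<and> Z 0 \<omega> \<ge> 0}"
      have "(\<integral>\<omega>. indicator ?Sh \<omega> * (Z 0 \<omega> * Z h \<omega>) \<partial>M) = (\<integral>\<omega>. indicator ?S0 \<omega> * (Z 0 \<omega> * Z 0 \<omega>) \<partial>M)"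
        by (rule integral_cong_AE) (use ae[of h] in \<open>auto elim!: eventually_mono simp: indicator_def\<close>)
      moreover have "measure M ?Sh = measure M ?S0"
        by (rule measure_eq_AE) (use ae[of h] in \<open>auto elim!: eventually_mono\<close>)
      ultimately show ?thesis unfolding kmm_def cond_exp_ev_def by simp
    qed
    have c0: "0 \<le> kmm M Z 0" by (rule kmm_nonneg[OF M])
    show "positive_definite (kmm M Z)"
      unfolding positive_definite_def
    proof (intro allI)
      fix n :: nat and x :: "nat \<Rightarrow> real ^ 'd" and a :: "nat \<Rightarrow> real"
      have s0: "(\<Sum>i<n. \<Sum>j<n. a i * a j * kmm M Z (x i - x j)) = (\<Sum>i<n. \<Sum>j<n. a i * a j * kmm M Z 0)"
        by (intro sum.cong refl) (rule arg_cong[OF keq])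
      have s1: "(\<Sum>i<n. \<Sum>j<n. a i * a j * kmm M Z (x i - x j)) = (\<Sum>i<n. \<Sum>j<n. a i * a j) * kmm M Z 0"
        unfolding s0 by (simp only: sum_distrib_right)
      have s2: "(\<Sum>i<n. \<Sum>j<n. a i * a j) = (\<Sum>i<n. a i) * (\<Sum>i<n. a i)" by (simp only: sum_product)
      have "0 \<le> (\<Sum>i<n. a i) * (\<Sum>i<n. a i) * kmm M Z 0" using c0 by simp
      then show "0 \<le> (\<Sum>i<n. \<Sum>j<n. a i * a j * kmm M Z (x i - x j))" unfolding s1 s2 .
    qed
  qed
qed


end
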